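(* Suppose $X,Y,Z \in \Omega(\Sigma)$ are three complementary regions meeting at a vertex $v \in V(\Sigma)$, and that the arrows on the edges $X \cap Y$ and $X \cap Z$ arising from the flow $f_\rho$ both point away from $v$. Then either $|x| \le 2$, or $y=z=0$.
   Context: Let $T$ be the one-holed torus with fundamental group $\pi$ free on two generators, and let $\rho:\pi\to \mathrm{SL}(2,\mathbb{C})$ be a representation (character) with $\operatorname{tr}\rho(XYX^{-1}Y^{-1})=\kappa$ for a pair of generators $X,Y$, where $\kappa \neq 2$. Let $\mathscr{C}$ be the set of free homotopy classes of essential simple closed curves on $T$, identified with the vertices of the Farey tessellation of the hyperbolic plane; let $\Sigma$ be the dual infinite trivalent tree, with vertex set $V(\Sigma)$, edge set $E(\Sigma)$, and set of complementary regions $\Omega(\Sigma)$, so that $\Omega(\Sigma)$ is in natural bijection with $\mathscr{C}$, vertices of $\Sigma$ correspond to triples of pairwise adjacent regions (generating triples), and each edge $e$ corresponds to a generating quadruple $(X,Y;Z,Z')$: $e=X\cap Y$ is the common boundary of regions $X,Y$, and $Z,Z'$ are the two regions meeting the two endpoints of $e$. The Fricke trace map $\phi:\Omega(\Sigma)\to\mathbb{C}$ is $\phi(W)=\operatorname{tr}\rho(W)$, and we write $x=\phi(X)$, $y=\phi(Y)$, $z=\phi(Z)$, etc. It satisfies the edge relation $z+z'=xy$ for every generating quadruple $(X,Y;Z,Z')$. The flow $f_\rho$ assigns to each edge $e \leftrightarrow (X,Y;Z,Z')$ the direction pointing from $Z$ towards $Z'$ if $|z|\ge|z'|$ (i.e.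 from the region with larger $|\phi|$ to the one with smaller $|\phi|$; ties are directed arbitrarily). *)

theory Defs
  imports Complex_Main "HOL-Computational_Algebra.Primes"
begin

text \<open>Complementary regions of the dual tree \<open>\<Sigma>\<close> = vertices of the Farey tessellation
  = extended rationals p/q, represented by the normalized coprime pair (p,q) with q > 0,
  or (1,0) for 1/0 = \<infinity>.\<close>
type_synonym region = "int \<times> int"

definition farey_region :: "region \<Rightarrow> bool" where
  "farey_region r \<longleftrightarrow> coprime (fst r) (snd r) \<and> (snd r > 0 \<or> r = (1, 0))"

text \<open>Two regions are adjacent (share an edge of \<open>\<Sigma>\<close>) iff the Farey vertices are joined
  by a Farey edge, i.e. the determinant is \<open>\<plusminus>1\<close>.\<close>
definition farey_adj :: "region \<Rightarrow> region \<Rightarrow> bool" where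
  "farey_adj X Y \<longleftrightarrow> farey_region X \<and> farey_region Y \<and>
     \<bar>fst X * snd Y - snd X * fst Y\<bar> = 1"

text \<open>Vertices of \<open>\<Sigma>\<close>: triples of pairwise adjacent regions (generating triples).\<close>
definition sigma_vertex :: "region \<Rightarrow> region \<Rightarrow> region \<Rightarrow> bool" where
  "sigma_vertex X Y Z \<longleftrightarrow> farey_adj X Y \<and> farey_adj Y Z \<and> farey_adj X Z"

text \<open>Generating quadruple \<open>(X,Y;Z,Z')\<close> for the edge \<open>e = X \<inter> Y\<close>: Z and Z' are the two
  regions meeting the two endpoints of e.\<close>
definition gen_quadruple :: "region \<Rightarrow> region \<Rightarrow> region \<Rightarrow> region \<Rightarrow> bool" where
  "gen_quadruple X Y Z Z' \<longleftrightarrow> sigma_vertex X Y Z \<and> sigma_vertex X Y Z' \<and> Z \<noteq> Z'"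

definition fricke_trace_map :: "complex \<Rightarrow> (region \<Rightarrow> complex) \<Rightarrow> bool" where
  "fricke_trace_map \<kappa> \<phi> \<longleftrightarrow>
     (\<forall>X Y Z Z'. gen_quadruple X Y Z Z' \<longrightarrow> \<phi> Z + \<phi> Z' = \<phi> X * \<phi> Y) \<and>
     (\<forall>X Y Z. sigma_vertex X Y Z \<longrightarrow>
        (\<phi> X)\<^sup>2 + (\<phi> Y)\<^sup>2 + (\<phi> Z)\<^sup>2 - \<phi> X * \<phi> Y * \<phi> Z = \<kappa> + 2)"

text \<open>The flow \<open>f\<^sub>\<rho>\<close>: to the edge \<open>{X,Y}\<close> with generating quadruple \<open>(X,Y;Z,Z')\<close> it
  assigns the region (Z or Z') towards whose endpoint the arrow points; the arrow points
  from the region with larger \<open>|\<phi>|\<close> to the one with smaller \<open>|\<phi>|\<close>, ties arbitrary.\<close>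
definition is_flow :: "(region \<Rightarrow> complex) \<Rightarrow> (region set \<Rightarrow> region) \<Rightarrow> bool" where
  "is_flow \<phi> f \<longleftrightarrow>
     (\<forall>X Y Z Z'. gen_quadruple X Y Z Z' \<longrightarrow>
        f {X, Y} \<in> {Z, Z'} \<and> (norm (\<phi> Z') < norm (\<phi> Z) \<longrightarrow> f {X, Y} = Z'))"

definition points_away :: "(region set \<Rightarrow> region) \<Rightarrow> region \<Rightarrow> region \<Rightarrow> region \<Rightarrow> bool" where
  "points_away f X Y Z \<longleftrightarrow> f {X, Y} \<noteq> Z"

end

theory Submission
  imports Defs
begin

definition nrm :: "region \<Rightarrow> region" where
  "nrm r = (if snd r > 0 then r else if snd r < 0 then (- fst r, - snd r) else (1, 0))"

lemma det_coprime:
  fixes a b c d :: int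
  assumes "\<bar>a * d - b * c\<bar> = 1"
  shows "coprime c d"
proof -
  have "gcd c d dvd a * d - b * c" by simp
  then have "gcd c d dvd \<bar>a * d - b * c\<bar>" by simp
  then have "gcd c d dvd 1" using assms by simp
  then show ?thesis by (simp add: coprime_iff_gcd_eq_1 gcd_eq_1_imp_coprime)
qed

lemma nrm_pm:
  assumes "\<bar>fst X * snd V - snd X * fst V\<bar> = 1" "farey_region X"
  shows "nrm V = V \<or> nrm V = (- fst V, - snd V)"
proof (cases "snd V = 0")
  case True
  obtain a b where X: "X = (a,b)" by (cases X)
  obtain c where V: "V = (c,0)" using True by (cases V) auto
  have "\<bar>b * c\<bar> = 1" using assms(1) X V by simp
  then have "b * c = 1 \<or> (- b) * c = 1" by (auto simp: abs_if split: if_splits)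
  then have "c = 1 \<or> c = -1" using zmult_eq_1_iff[of b c] zmult_eq_1_iff[of "-b" c] by blast
  then have "\<bar>c\<bar> = 1" by auto
  then show ?thesis using V True unfolding nrm_def by auto
qed (auto simp: nrm_def)

lemma nrm_adj:
  assumes "\<bar>fst X * snd V - snd X * fst V\<bar> = 1" "farey_region X"
  shows "farey_adj X (nrm V)"
proof -
  have h: "nrm V = V \<or> nrm V = (- fst V, - snd V)" using nrm_pm assms .
  have d: "\<bar>fst X * snd (nrm V) - snd X * fst (nrm V)\<bar> = 1"
    using h assms(1) by (auto simp: algebra_simps abs_minus_commute)
  have "coprime (fst (nrm V)) (snd (nrm V))" using det_coprime[OF d] .
  moreover have "snd (nrm V) > 0 \<or> nrm V = (1,0)" by (auto simp: nrm_def)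
  ultimately show ?thesis using assms d by (simp add: farey_adj_def farey_region_def)
qed

lemma farey_nonzero: "farey_region X \<Longrightarrow> X \<noteq> (0,0)"
  by (auto simp: farey_region_def)

lemma exists_other:
  assumes "farey_adj X Y"
  shows "\<exists>W. sigma_vertex X Y W \<and> W \<noteq> Z"
proof -
  obtain a b where X: "X = (a,b)" by (cases X)
  obtain c d where Y: "Y = (c,d)" by (cases Y)
  have fX: "farey_region X" and fY: "farey_region Y" and D: "\<bar>a*d - b*c\<bar> = 1"
    using assms X Y by (auto simp: farey_adj_def)
  define P where "P = (a + c, b + d)"
  define M where "M = (a - c, b - d)"
  have "farey_adj X (nrm P)" by (rule nrm_adj[OF _ fX]) (use D X P_def in \<open>auto simp: algebra_simps\<close>)
  moreover have "farey_adj Y (nrm P)" by (rule nrm_adj[OF _ fY]) (use D Y P_def in \<open>auto simp: algebra_simps abs_minus_commute\<close>)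
  moreover have "farey_adj X (nrm M)" by (rule nrm_adj[OF _ fX]) (use D X M_def in \<open>auto simp: algebra_simps\<close>)
  moreover have "farey_adj Y (nrm M)" by (rule nrm_adj[OF _ fY]) (use D Y M_def in \<open>auto simp: algebra_simps abs_minus_commute\<close>)
  moreover have "nrm P \<noteq> nrm M"
  proof
    assume e: "nrm P = nrm M"
    have p: "nrm P = P \<or> nrm P = (- fst P, - snd P)"
      by (rule nrm_pm[OF _ fX]) (use D X P_def in \<open>auto simp: algebra_simps\<close>)
    have m: "nrm M = M \<or> nrm M = (- fst M, - snd M)"
      by (rule nrm_pm[OF _ fX]) (use D X M_def in \<open>auto simp: algebra_simps\<close>)
    have "X = (0,0) \<or> Y = (0,0)" using p m e X Y P_def M_def by auto
    then show False using farey_nonzero fX fY by blast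
  qed
  ultimately show ?thesis using assms unfolding sigma_vertex_def
    by (metis farey_adj_def abs_minus_commute)
qed

lemma key:
  fixes x y z :: complex
  assumes "norm (x*y - z) \<le> norm z" "norm (x*z - y) \<le> norm y" "norm x > 2"
  shows "y = 0 \<and> z = 0"
proof -
  have a: "norm x * norm y \<le> 2 * norm z"
    using norm_triangle_ineq[of "x*y - z" z] assms(1) by (simp add: norm_mult)
  have b: "norm x * norm z \<le> 2 * norm y"
    using norm_triangle_ineq[of "x*z - y" y] assms(2) by (simp add: norm_mult)
  have "norm x * (norm x * norm z) \<le> norm x * (2 * norm y)"
    using b assms(3) by (intro mult_left_mono) auto
  also have "\<dots> = 2 * (norm x * norm y)" by simp
  also have "\<dots> \<le> 2 * (2 * norm z)" using a by simp
  finally have c: "norm x * norm x * norm z \<le> 4 * norm z" by (simp add: mult.assoc)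
  have "norm z = 0"
  proof (rule ccontr)
    assume "norm z \<noteq> 0"
    then have "norm z > 0" by simp
    moreover have "2 * 2 < norm x * norm x" using assms(3)
      by (intro mult_strict_mono) auto
    then have "4 < norm x * norm x" by simp
    ultimately have "4 * norm z < norm x * norm x * norm z" by simp
    then show False using c by simp
  qed
  then have "norm x * norm y \<le> 0" using a by simp
  moreover have "norm y > 0 \<Longrightarrow> norm x * norm y > 0" using assms(3) by (intro mult_pos_pos) auto
  ultimately have "norm y \<le> 0" by linarith
  then have "norm y = 0" by simp
  then show ?thesis using \<open>norm z = 0\<close> by simp
qed

theorem proposition3p3:
  fixes \<kappa> :: complex and \<phi> :: "region \<Rightarrow> complex" and f :: "region set \<Rightarrow> region"
    and X Y Z :: region
  assumes "\<kappa> \<noteq> 2"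
    and "fricke_trace_map \<kappa> \<phi>"
    and "is_flow \<phi> f"
    and "sigma_vertex X Y Z"
    and "points_away f X Y Z"
    and "points_away f X Z Y"
  shows "norm (\<phi> X) \<le> 2 \<or> (\<phi> Y = 0 \<and> \<phi> Z = 0)"
proof -
  have sw: "\<And>A B :: region. \<bar>fst A * snd B - snd A * fst B\<bar> = \<bar>fst B * snd A - snd B * fst A\<bar>"
    by (metis abs_minus_commute mult.commute)
  have sv: "sigma_vertex X Z Y" using assms(4) sw by (auto simp: sigma_vertex_def farey_adj_def)
  obtain W where W: "sigma_vertex X Y W" "W \<noteq> Z" using exists_other assms(4) sigma_vertex_def by blast
  obtain V where V: "sigma_vertex X Z V" "V \<noteq> Y" using exists_other sv sigma_vertex_def by blast
  have q1: "gen_quadruple X Y W Z" "gen_quadruple X Y Z W" using W assms(4) by (auto simp: gen_quadruple_def)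
  have q2: "gen_quadruple X Z V Y" "gen_quadruple X Z Y V" using V sv by (auto simp: gen_quadruple_def)
  have e1: "\<phi> Z + \<phi> W = \<phi> X * \<phi> Y" using q1(2) assms(2) unfolding fricke_trace_map_def by blast
  have e2: "\<phi> Y + \<phi> V = \<phi> X * \<phi> Z" using q2(2) assms(2) unfolding fricke_trace_map_def by blast
  have "norm (\<phi> Z) < norm (\<phi> W) \<longrightarrow> f {X, Y} = Z" using q1(1) assms(3) unfolding is_flow_def by blast
  then have n1: "norm (\<phi> W) \<le> norm (\<phi> Z)" using assms(5) unfolding points_away_def by linarith
  have "norm (\<phi> Y) < norm (\<phi> V) \<longrightarrow> f {X, Z} = Y" using q2(1) assms(3) unfolding is_flow_def by blast
  then have n2: "norm (\<phi> V) \<le> norm (\<phi> Y)" using assms(6) unfolding points_away_def by linarith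
  have "\<phi> W = \<phi> X * \<phi> Y - \<phi> Z" "\<phi> V = \<phi> X * \<phi> Z - \<phi> Y" using e1 e2 by (auto simp: algebra_simps)
  then show ?thesis using key[of "\<phi> X" "\<phi> Y" "\<phi> Z"] n1 n2 by fastforce
qed

end
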